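(* Let $\mathbb{K}$ be a field of characteristic zero, let $t\in\mathbb{K}\setminus\{0,1\}$, and let $\mathfrak{g}$ be a finite-dimensional perfect Lie algebra over $\mathbb{K}$, i.e. $\mathfrak{g}^{(2)}=\mathfrak{g}$. Then $\mathcal{D}(t,1,0)(\mathfrak{g})=\{0\}$.
   Context: For a Lie algebra $\mathfrak{g}=(V,\mu)$, the derived algebra $\mathfrak{g}^{(2)}$ is the linear span of all products $\mu(X,Y)$. $\mathcal{D}(t,1,0)(\mathfrak{g})$ denotes the space of $(t,1,0)$-derivations of $\mathfrak{g}$: linear maps $D:V\to V$ with $tD\mu(X,Y)=\mu(DX,Y)$ for all $X,Y\in V$. *)

theory Defs
  imports Complex_Main
begin

definition lie_algebra :: "('k::field \<Rightarrow> 'v::ab_group_add \<Rightarrow> 'v) \<Rightarrow> ('v \<Rightarrow> 'v \<Rightarrow> 'v) \<Rightarrow> bool" where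
  "lie_algebra scale \<mu> \<longleftrightarrow>
     vector_space scale \<and>
     (\<forall>x. Vector_Spaces.linear scale scale (\<mu> x)) \<and>
     (\<forall>y. Vector_Spaces.linear scale scale (\<lambda>x. \<mu> x y)) \<and>
     (\<forall>x. \<mu> x x = 0) \<and>
     (\<forall>x y z. \<mu> x (\<mu> y z) + \<mu> y (\<mu> z x) + \<mu> z (\<mu> x y) = 0)"

definition finite_dim :: "('k::field \<Rightarrow> 'v::ab_group_add \<Rightarrow> 'v) \<Rightarrow> bool" where
  "finite_dim scale \<longleftrightarrow> (\<exists>B. finite B \<and> module.span scale B = UNIV)"

definition derived_algebra :: "('k::field \<Rightarrow> 'v::ab_group_add \<Rightarrow> 'v) \<Rightarrow> ('v \<Rightarrow> 'v \<Rightarrow> 'v) \<Rightarrow> 'v set" where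
  "derived_algebra scale \<mu> = module.span scale {\<mu> x y | x y. True}"

text \<open>(t,1,0)-derivations: linear D with t D(mu X Y) = mu (D X) Y.\<close>
definition gen_derivations :: "('k::field \<Rightarrow> 'v::ab_group_add \<Rightarrow> 'v) \<Rightarrow> ('v \<Rightarrow> 'v \<Rightarrow> 'v) \<Rightarrow> 'k \<Rightarrow> ('v \<Rightarrow> 'v) set" where
  "gen_derivations scale \<mu> t =
     {D. Vector_Spaces.linear scale scale D \<and> (\<forall>x y. scale t (D (\<mu> x y)) = \<mu> (D x) y)}"

end

theory Submission
  imports Defs
begin

lemma kill_on_span:
  assumes "Vector_Spaces.linear s s f" "\<And>x. x \<in> S \<Longrightarrow> f x = 0" "x \<in> module.span s S"
  shows "f x = 0"
proof -
  have "module_hom s s f" using assms(1) by (simp add: module_hom_iff_linear)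
  then show ?thesis using module_hom.eq_0_on_span[of s s f S x] assms(2,3) by blast
qed

theorem theorem3p3:
  fixes scale :: "'k::field_char_0 \<Rightarrow> 'v::ab_group_add \<Rightarrow> 'v"
    and \<mu> :: "'v \<Rightarrow> 'v \<Rightarrow> 'v" and t :: 'k
  assumes "lie_algebra scale \<mu>"
    and "finite_dim scale"
    and "t \<noteq> 0" and "t \<noteq> 1"
    and "derived_algebra scale \<mu> = UNIV"
  shows "gen_derivations scale \<mu> t = {\<lambda>_. 0}"
proof -
  have VS: "vector_space scale" and LX: "\<And>x. Vector_Spaces.linear scale scale (\<mu> x)"
    and LY: "\<And>y. Vector_Spaces.linear scale scale (\<lambda>x. \<mu> x y)"
    and alt: "\<And>x. \<mu> x x = 0"
    and jac: "\<And>x y z. \<mu> x (\<mu> y z) + \<mu> y (\<mu> z x) + \<mu> z (\<mu> x y) = 0"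
    using assms(1) unfolding lie_algebra_def by auto
  have addR: "\<mu> x (a + b) = \<mu> x a + \<mu> x b" for x a b using LX[of x] by (simp add: Vector_Spaces.linear_iff)
  have sclR: "\<mu> x (scale c a) = scale c (\<mu> x a)" for x a c using LX[of x] by (simp add: Vector_Spaces.linear_iff)
  have addL: "\<mu> (a + b) y = \<mu> a y + \<mu> b y" for y a b using LY[of y] by (simp add: Vector_Spaces.linear_iff)
  have zL: "\<mu> 0 y = 0" for y using addL[of 0 0 y] by simp
  have anti: "\<mu> x y = - \<mu> y x" for x y
  proof -
    have "0 = \<mu> (x + y) (x + y)" by (simp add: alt)
    also have "\<dots> = \<mu> x x + \<mu> x y + (\<mu> y x + \<mu> y y)" by (simp add: addL addR add.assoc)
    finally show ?thesis by (simp add: alt eq_neg_iff_add_eq_0)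
  qed
  have sadd: "scale c (a + b) = scale c a + scale c b" for c a b
    using VS by (simp add: vector_space_def)
  have sassoc: "scale c (scale d a) = scale (c * d) a" for c d a
    using VS by (simp add: vector_space_def)
  have sdistr: "scale (c + d) a = scale c a + scale d a" for c d a
    using VS by (simp add: vector_space_def)
  have s0: "scale c 0 = 0" for c using sadd[of c 0 0] by simp
  have sneg: "scale c (- a) = - scale c a" for c a
    using sadd[of c a "- a"] s0[of c] by (simp add: eq_neg_iff_add_eq_0 add.commute)
  have sz: "scale 0 a = 0" for a using sdistr[of 0 0 a] by simp
  have sminus: "scale (- c) a = - scale c a" for c a
    using sdistr[of c "- c" a] sz by (simp add: eq_neg_iff_add_eq_0 add.commute)
  show ?thesis
  proof (rule set_eqI, rule iffI)
    fix D assume "D \<in> gen_derivations scale \<mu> t"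
    then have LD: "Vector_Spaces.linear scale scale D"
      and Lft: "\<And>x y. scale t (D (\<mu> x y)) = \<mu> (D x) y"
      unfolding gen_derivations_def by auto
    have Dadd: "D (a + b) = D a + D b" for a b using LD by (simp add: Vector_Spaces.linear_iff)
    have Dscl: "D (scale c a) = scale c (D a)" for c a using LD by (simp add: Vector_Spaces.linear_iff)
    have D0: "D 0 = 0" using Dadd[of 0 0] by simp
    have Dneg: "D (- a) = - D a" for a
      using Dadd[of a "- a"] Dscl[of 0 0] sz by (metis add.right_inverse eq_neg_iff_add_eq_0)
    have Rgt: "scale t (D (\<mu> x y)) = \<mu> x (D y)" for x y
      using Lft[of y x] anti[of x y] anti[of "D y" x] by (simp add: Dneg sneg)
    have K1: "scale (t*t) (D (\<mu> x (\<mu> y z))) = \<mu> x (\<mu> (D y) z)" for x y z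
      by (metis Lft Rgt sassoc sclR)
    have K2: "scale (t*t) (D (\<mu> x (\<mu> y z))) = \<mu> x (\<mu> y (D z))" for x y z
      by (metis Rgt sassoc sclR)
    have key: "D (\<mu> x (\<mu> y z)) = 0" for x y z
    proof -
      let ?a = "D (\<mu> x (\<mu> y z))" and ?b = "D (\<mu> y (\<mu> z x))" and ?c = "D (\<mu> z (\<mu> x y))"
      have j1: "\<mu> (D x) (\<mu> y z) + \<mu> y (\<mu> z (D x)) + \<mu> z (\<mu> (D x) y) = 0" by (rule jac)
      have e1: "\<mu> (D x) (\<mu> y z) = scale t ?a" by (simp add: Lft)
      have e2: "\<mu> y (\<mu> z (D x)) = scale (t*t) ?b" by (simp add: K2)
      have e3: "\<mu> z (\<mu> (D x) y) = scale (t*t) ?c" by (simp add: K1)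
      have j2: "?a + ?b + ?c = 0" using arg_cong[OF jac[of x y z], of D] by (simp add: Dadd D0)
      then have bc: "?b + ?c = - ?a" by (metis add.assoc eq_neg_iff_add_eq_0 add.commute)
      have "0 = scale t ?a + scale (t*t) (?b + ?c)"
        using j1 e1 e2 e3 by (simp add: sadd add.assoc)
      also have "\<dots> = scale (t - t*t) ?a"
        using sdistr[of t "- (t*t)" ?a] by (simp add: bc sneg sminus)
      finally have "scale (t - t*t) ?a = 0" by simp
      moreover have "t - t*t \<noteq> 0"
      proof
        assume "t - t*t = 0"
        then have "t * (1 - t) = 0" by (simp add: algebra_simps)
        with assms(3,4) show False by simp
      qed
      ultimately have "scale (inverse (t - t*t)) (scale (t - t*t) ?a) = 0" by (simp add: s0)
      then show ?thesis using \<open>t - t*t \<noteq> 0\<close> VS by (simp add: sassoc vector_space_def)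
    qed
    have span: "w \<in> module.span scale {\<mu> x y | x y. True}" for w
      using assms(5) unfolding derived_algebra_def by auto
    have key2: "D (\<mu> x w) = 0" for x w
    proof -
      have L: "Vector_Spaces.linear scale scale (D \<circ> \<mu> x)"
        by (rule Vector_Spaces.linear_compose[OF LX LD])
      have "(D \<circ> \<mu> x) w = 0"
        by (rule kill_on_span[OF L _ span[of w]]) (auto simp: key)
      then show ?thesis by simp
    qed
    show "D \<in> {\<lambda>_. 0}"
    proof -
      have "D w = 0" for w
        by (rule kill_on_span[OF LD _ span[of w]]) (auto simp: key2)
      then show ?thesis by auto
    qed
  next
    fix D :: "'v \<Rightarrow> 'v" assume "D \<in> {\<lambda>_. 0}"
    then have "D = (\<lambda>_. 0)" by simp
    moreover have "Vector_Spaces.linear scale scale (\<lambda>_. 0::'v)"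
      using VS by (simp add: Vector_Spaces.linear_iff s0)
    ultimately show "D \<in> gen_derivations scale \<mu> t"
      unfolding gen_derivations_def by (simp add: s0 zL)
  qed
qed

end
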